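(* Let $(X,\tau)$ be a $\mathbb{B}$-topological space. (i) $(X,\tau)$ is $R_0$ if and only if both topological spaces $(X,\tau[tt])$ and $(X,\tau[ff])$ are $R_0$. (ii) $(X,\tau)$ is $T_1$ if and only if the topological space $(X,\tau[tt]\vee\tau[ff])$ is $T_0$ and both $(X,\tau[tt])$ and $(X,\tau[ff])$ are $R_0$.
   Context: $\mathbb{B}=\{0,1,tt,ff\}$ is the four-element Boolean algebra with bottom $0$, top $1$, and $tt,ff$ incomparable complements; $a\to b=\neg a\vee b$. A $\mathbb{B}$-topology on $X$ is $\tau\subseteq\mathbb{B}^X$ containing all constant maps and closed under arbitrary pointwise joins and finite pointwise meets; $\tau[b]=\{\lambda[b]:\lambda\in\tau\}$ with $\lambda[b]=\{x:\lambda(x)\ge b\}$, for $b\in\{tt,ff\}$, are topologies; $\tau[tt]\vee\tau[ff]$ is the topology generated by their union. Specialization $\mathbb{B}$-order: $\Omega(\tau)(x,y)=\bigwedge_{\lambda\in\tau}(\lambda(x)\to\lambda(y))$. $(X,\tau)$ is $R_0$ if $\Omega(\tau)(x,y)=\Omega(\tau)(y,x)$ for all $x,y$; $T_0$ if $\Omega(\tau)(x,y)=1=\Omega(\tau)(y,x)$ implies $x=y$; $T_1$ if both $T_0$ and $R_0$. A topological space is $R_0$ if every open set containing a point contains the closure of that point's singleton. *)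

theory Defs
  imports "HOL-Analysis.Analysis"
begin

datatype B4 = Bot | Top | TT | FF

fun bleq :: "B4 \<Rightarrow> B4 \<Rightarrow> bool" where
  "bleq Bot _ = True"
| "bleq _ Top = True"
| "bleq TT b = (b = TT)"
| "bleq FF b = (b = FF)"
| "bleq Top _ = False"

fun bneg :: "B4 \<Rightarrow> B4" where
  "bneg Bot = Top" | "bneg Top = Bot" | "bneg TT = FF" | "bneg FF = TT"

fun bjoin :: "B4 \<Rightarrow> B4 \<Rightarrow> B4" where
  "bjoin Bot b = b"
| "bjoin Top _ = Top"
| "bjoin TT b = (if bleq b TT then TT else Top)"
| "bjoin FF b = (if bleq b FF then FF else Top)"

fun bmeet :: "B4 \<Rightarrow> B4 \<Rightarrow> B4" where
  "bmeet Top b = b"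
| "bmeet Bot _ = Bot"
| "bmeet TT b = (if bleq TT b then TT else Bot)"
| "bmeet FF b = (if bleq FF b then FF else Bot)"

definition bimp :: "B4 \<Rightarrow> B4 \<Rightarrow> B4" where
  "bimp a b = bjoin (bneg a) b"

definition bSup :: "B4 set \<Rightarrow> B4" where
  "bSup S = (if S \<subseteq> {Bot} then Bot else if S \<subseteq> {Bot, TT} then TT
             else if S \<subseteq> {Bot, FF} then FF else Top)"

definition bInf :: "B4 set \<Rightarrow> B4" where
  "bInf S = (if S \<subseteq> {Top} then Top else if S \<subseteq> {Top, TT} then TT
             else if S \<subseteq> {Top, FF} then FF else Bot)"

text \<open>B-topology on the carrier UNIV of type 'a.\<close>
definition B_topology :: "('a \<Rightarrow> B4) set \<Rightarrow> bool" where
  "B_topology \<tau> \<longleftrightarrow>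
     (\<forall>b. (\<lambda>_. b) \<in> \<tau>) \<and>
     (\<forall>S. S \<subseteq> \<tau> \<longrightarrow> (\<lambda>x. bSup ((\<lambda>f. f x) ` S)) \<in> \<tau>) \<and>
     (\<forall>f\<in>\<tau>. \<forall>g\<in>\<tau>. (\<lambda>x. bmeet (f x) (g x)) \<in> \<tau>)"

definition cut :: "('a \<Rightarrow> B4) \<Rightarrow> B4 \<Rightarrow> 'a set" where
  "cut f b = {x. bleq b (f x)}"

definition level :: "('a \<Rightarrow> B4) set \<Rightarrow> B4 \<Rightarrow> 'a set set" where
  "level \<tau> b = (\<lambda>f. cut f b) ` \<tau>"

definition level_top :: "('a \<Rightarrow> B4) set \<Rightarrow> B4 \<Rightarrow> 'a topology" where
  "level_top \<tau> b = topology (\<lambda>U. U \<in> level \<tau> b)"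

definition spec :: "('a \<Rightarrow> B4) set \<Rightarrow> 'a \<Rightarrow> 'a \<Rightarrow> B4" where
  "spec \<tau> x y = bInf ((\<lambda>f. bimp (f x) (f y)) ` \<tau>)"

definition B_R0 :: "('a \<Rightarrow> B4) set \<Rightarrow> bool" where
  "B_R0 \<tau> \<longleftrightarrow> (\<forall>x y. spec \<tau> x y = spec \<tau> y x)"

definition B_T0 :: "('a \<Rightarrow> B4) set \<Rightarrow> bool" where
  "B_T0 \<tau> \<longleftrightarrow> (\<forall>x y. spec \<tau> x y = Top \<and> spec \<tau> y x = Top \<longrightarrow> x = y)"

definition B_T1 :: "('a \<Rightarrow> B4) set \<Rightarrow> bool" where
  "B_T1 \<tau> \<longleftrightarrow> B_T0 \<tau> \<and> B_R0 \<tau>"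

definition R0_space :: "'a topology \<Rightarrow> bool" where
  "R0_space T \<longleftrightarrow> (\<forall>U x. openin T U \<and> x \<in> U \<longrightarrow> T closure_of {x} \<subseteq> U)"

end

theory Submission
  imports Defs
begin

definition st :: "('a \<Rightarrow> B4) set \<Rightarrow> B4 \<Rightarrow> 'a \<Rightarrow> 'a \<Rightarrow> bool" where
  "st \<tau> c x y \<longleftrightarrow> (\<forall>f\<in>\<tau>. bleq c (f x) \<longrightarrow> bleq c (f y))"

lemma bimp_top: "bimp a b = Top \<longleftrightarrow> (bleq TT a \<longrightarrow> bleq TT b) \<and> (bleq FF a \<longrightarrow> bleq FF b)"
  by (cases a; cases b; simp add: bimp_def)
lemma bimp_tt: "bimp a b \<in> {Top, TT} \<longleftrightarrow> (bleq TT a \<longrightarrow> bleq TT b)"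
  by (cases a; cases b; simp add: bimp_def)
lemma bimp_ff: "bimp a b \<in> {Top, FF} \<longleftrightarrow> (bleq FF a \<longrightarrow> bleq FF b)"
  by (cases a; cases b; simp add: bimp_def)

lemma spec_char:
  "spec \<tau> x y = (if st \<tau> TT x y \<and> st \<tau> FF x y then Top else if st \<tau> TT x y then TT
                  else if st \<tau> FF x y then FF else Bot)"
proof -
  let ?S = "(\<lambda>f. bimp (f x) (f y)) ` \<tau>"
  have 1: "?S \<subseteq> {Top} \<longleftrightarrow> st \<tau> TT x y \<and> st \<tau> FF x y"
    using bimp_top unfolding st_def by blast
  have 2: "?S \<subseteq> {Top, TT} \<longleftrightarrow> st \<tau> TT x y"
    using bimp_tt unfolding st_def by blast
  have 3: "?S \<subseteq> {Top, FF} \<longleftrightarrow> st \<tau> FF x y"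
    using bimp_ff unfolding st_def by blast
  show ?thesis unfolding spec_def bInf_def using 1 2 3 by simp
qed

lemma spec_Top: "spec \<tau> x y = Top \<longleftrightarrow> st \<tau> TT x y \<and> st \<tau> FF x y"
  by (simp add: spec_char)

lemma B_R0_char: "B_R0 \<tau> \<longleftrightarrow> (\<forall>x y. st \<tau> TT x y = st \<tau> TT y x) \<and> (\<forall>x y. st \<tau> FF x y = st \<tau> FF y x)"
  unfolding B_R0_def spec_char by (auto split: if_splits)

lemma bmeet_cut: "c \<in> {TT, FF} \<Longrightarrow> bleq c (bmeet a b) \<longleftrightarrow> bleq c a \<and> bleq c b"
  by (cases a; cases b; auto)

lemma bSup_TT: "bleq TT (bSup A) \<longleftrightarrow> (\<exists>a\<in>A. bleq TT a)"
proof -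
  have "bleq TT a \<longleftrightarrow> a \<in> {TT, Top}" for a by (cases a) auto
  moreover have "bleq TT (bSup A) \<longleftrightarrow> \<not> A \<subseteq> {Bot, FF}"
    unfolding bSup_def by auto
  moreover have "\<not> A \<subseteq> {Bot, FF} \<longleftrightarrow> (\<exists>a\<in>A. a \<in> {TT, Top})"
  proof -
    have e: "a \<notin> {Bot, FF} \<longleftrightarrow> a \<in> {TT, Top}" for a by (cases a) auto
    have "\<not> A \<subseteq> {Bot, FF} \<longleftrightarrow> (\<exists>a\<in>A. a \<notin> {Bot, FF})" by blast
    then show ?thesis using e by simp
  qed
  ultimately show ?thesis by auto
qed

lemma bSup_FF: "bleq FF (bSup A) \<longleftrightarrow> (\<exists>a\<in>A. bleq FF a)"
proof -
  have "bleq FF a \<longleftrightarrow> a \<in> {FF, Top}" for a by (cases a) auto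
  moreover have "bleq FF (bSup A) \<longleftrightarrow> \<not> A \<subseteq> {Bot, TT}"
    unfolding bSup_def by auto
  moreover have "\<not> A \<subseteq> {Bot, TT} \<longleftrightarrow> (\<exists>a\<in>A. a \<in> {FF, Top})"
  proof -
    have e: "a \<notin> {Bot, TT} \<longleftrightarrow> a \<in> {FF, Top}" for a by (cases a) auto
    have "\<not> A \<subseteq> {Bot, TT} \<longleftrightarrow> (\<exists>a\<in>A. a \<notin> {Bot, TT})" by blast
    then show ?thesis using e by simp
  qed
  ultimately show ?thesis by auto
qed

lemma bSup_cut: "c \<in> {TT, FF} \<Longrightarrow> bleq c (bSup A) \<longleftrightarrow> (\<exists>a\<in>A. bleq c a)"
  using bSup_TT bSup_FF by auto

lemma istop_level:
  assumes T: "B_topology \<tau>" and c: "c \<in> {TT, FF}"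
  shows "istopology (\<lambda>U. U \<in> level \<tau> c)"
  unfolding istopology_def
proof (intro conjI allI impI)
  fix S T assume "S \<in> level \<tau> c" "T \<in> level \<tau> c"
  then obtain f g where f: "f \<in> \<tau>" "S = cut f c" and g: "g \<in> \<tau>" "T = cut g c"
    unfolding level_def by auto
  have "\<forall>f\<in>\<tau>. \<forall>g\<in>\<tau>. (\<lambda>x. bmeet (f x) (g x)) \<in> \<tau>" using T unfolding B_topology_def by simp
  then have "(\<lambda>x. bmeet (f x) (g x)) \<in> \<tau>" using f g by simp
  moreover have "S \<inter> T = cut (\<lambda>x. bmeet (f x) (g x)) c"
    using f g bmeet_cut[OF c] unfolding cut_def by auto
  ultimately show "S \<inter> T \<in> level \<tau> c" unfolding level_def by blast
next
  fix K assume K: "\<forall>S\<in>K. S \<in> level \<tau> c"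
  define F where "F = {f\<in>\<tau>. cut f c \<in> K}"
  have sup: "\<And>S. S \<subseteq> \<tau> \<Longrightarrow> (\<lambda>x. bSup ((\<lambda>f. f x) ` S)) \<in> \<tau>"
    using T unfolding B_topology_def by simp
  have "F \<subseteq> \<tau>" unfolding F_def by simp
  then have "(\<lambda>x. bSup ((\<lambda>f. f x) ` F)) \<in> \<tau>" by (rule sup)
  moreover have "\<Union>K = cut (\<lambda>x. bSup ((\<lambda>f. f x) ` F)) c"
  proof -
    have "\<Union>K = (\<Union>f\<in>F. cut f c)"
    proof
      show "\<Union>K \<subseteq> (\<Union>f\<in>F. cut f c)"
      proof
        fix x assume "x \<in> \<Union>K"
        then obtain S where S: "S \<in> K" "x \<in> S" by blast
        then obtain f where "f \<in> \<tau>" "S = cut f c" using K unfolding level_def by blast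
        then show "x \<in> (\<Union>f\<in>F. cut f c)" using S unfolding F_def by blast
      qed
      show "(\<Union>f\<in>F. cut f c) \<subseteq> \<Union>K" unfolding F_def by blast
    qed
    also have "\<dots> = cut (\<lambda>x. bSup ((\<lambda>f. f x) ` F)) c"
    proof -
      have "x \<in> cut (\<lambda>x. bSup ((\<lambda>f. f x) ` F)) c \<longleftrightarrow> (\<exists>f\<in>F. x \<in> cut f c)" for x
        unfolding cut_def mem_Collect_eq bSup_cut[OF c] by blast
      then show ?thesis by blast
    qed
    finally show ?thesis .
  qed
  ultimately show "\<Union>K \<in> level \<tau> c" unfolding level_def by blast
qed

lemma openin_level:
  assumes "B_topology \<tau>" "c \<in> {TT, FF}"
  shows "openin (level_top \<tau> c) U \<longleftrightarrow> U \<in> level \<tau> c"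
  unfolding level_top_def using topology_inverse'[OF istop_level[OF assms]] by simp

lemma UNIV_level:
  assumes "B_topology \<tau>" "c \<in> {TT, FF}"
  shows "UNIV \<in> level \<tau> c"
proof -
  have "(\<lambda>_. Top) \<in> \<tau>" using assms unfolding B_topology_def by blast
  moreover have "cut (\<lambda>_. Top) c = UNIV" unfolding cut_def by (cases c) auto
  ultimately show ?thesis unfolding level_def by (metis image_eqI)
qed

lemma topspace_level:
  assumes "B_topology \<tau>" "c \<in> {TT, FF}"
  shows "topspace (level_top \<tau> c) = UNIV"
  using openin_level[OF assms] UNIV_level[OF assms] openin_subset by (metis top.extremum_uniqueI)

lemma R0_char:
  assumes T: "B_topology \<tau>" and c: "c \<in> {TT, FF}"
  shows "R0_space (level_top \<tau> c) \<longleftrightarrow> (\<forall>x y. st \<tau> c x y = st \<tau> c y x)"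
proof -
  have cl: "y \<in> level_top \<tau> c closure_of {x} \<longleftrightarrow> st \<tau> c y x" for x y
    unfolding closure_of_def topspace_level[OF assms] openin_level[OF assms] st_def
      level_def cut_def by auto
  have "R0_space (level_top \<tau> c) \<longleftrightarrow> (\<forall>f\<in>\<tau>. \<forall>x y. bleq c (f x) \<longrightarrow> st \<tau> c y x \<longrightarrow> bleq c (f y))"
    unfolding R0_space_def openin_level[OF assms] subset_iff cl
    by (auto simp: level_def cut_def)
  also have "\<dots> \<longleftrightarrow> (\<forall>x y. st \<tau> c x y = st \<tau> c y x)"
    unfolding st_def by blast
  finally show ?thesis .
qed

lemma gen_sep:
  assumes "generate_topology_on S U" "\<forall>V\<in>S. x \<in> V \<longleftrightarrow> y \<in> V"
  shows "x \<in> U \<longleftrightarrow> y \<in> U"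
  using assms by (induction rule: generate_topology_on.induct) auto

lemma T0_char:
  assumes T: "B_topology \<tau>"
  shows "B_T0 \<tau> \<longleftrightarrow> t0_space (topology_generated_by (level \<tau> TT \<union> level \<tau> FF))"
proof -
  have top: "topspace (topology_generated_by (level \<tau> TT \<union> level \<tau> FF)) = UNIV"
    using UNIV_level[OF T, of TT] by auto
  have sep: "(\<exists>V\<in>level \<tau> TT \<union> level \<tau> FF. \<not>(x \<in> V \<longleftrightarrow> y \<in> V)) \<longleftrightarrow>
      \<not> (st \<tau> TT x y \<and> st \<tau> FF x y \<and> st \<tau> TT y x \<and> st \<tau> FF y x)" for x y
  proof -
    have a: "(\<exists>V\<in>level \<tau> c. \<not>(x \<in> V \<longleftrightarrow> y \<in> V)) \<longleftrightarrow> \<not> (st \<tau> c x y \<and> st \<tau> c y x)" for c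
      unfolding st_def level_def cut_def by force
    have b: "(\<exists>V\<in>level \<tau> TT \<union> level \<tau> FF. \<not>(x \<in> V \<longleftrightarrow> y \<in> V)) \<longleftrightarrow>
      (\<exists>V\<in>level \<tau> TT. \<not>(x \<in> V \<longleftrightarrow> y \<in> V)) \<or> (\<exists>V\<in>level \<tau> FF. \<not>(x \<in> V \<longleftrightarrow> y \<in> V))"
      by blast
    show ?thesis unfolding b a by blast
  qed
  have "t0_space (topology_generated_by (level \<tau> TT \<union> level \<tau> FF)) \<longleftrightarrow>
     (\<forall>x y. x \<noteq> y \<longrightarrow> (\<exists>V\<in>level \<tau> TT \<union> level \<tau> FF. \<not>(x \<in> V \<longleftrightarrow> y \<in> V)))"
    unfolding t0_space_def top openin_topology_generated_by_iff
  proof (intro iffI allI impI ballI)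
    fix x y :: 'a assume H: "\<forall>x\<in>UNIV. \<forall>y\<in>UNIV. x \<noteq> y \<longrightarrow> (\<exists>U. generate_topology_on (level \<tau> TT \<union> level \<tau> FF) U \<and> (x \<notin> U) = (y \<in> U))"
      and "x \<noteq> y"
    then obtain U where U: "generate_topology_on (level \<tau> TT \<union> level \<tau> FF) U" "(x \<notin> U) = (y \<in> U)" by blast
    show "\<exists>V\<in>level \<tau> TT \<union> level \<tau> FF. \<not>(x \<in> V \<longleftrightarrow> y \<in> V)"
    proof (rule ccontr)
      assume "\<not> ?thesis"
      then have "x \<in> U \<longleftrightarrow> y \<in> U" using gen_sep[OF U(1)] by blast
      then show False using U(2) by blast
    qed
  next
    fix x y :: 'a assume H: "\<forall>x y. x \<noteq> y \<longrightarrow> (\<exists>V\<in>level \<tau> TT \<union> level \<tau> FF. \<not>(x \<in> V \<longleftrightarrow> y \<in> V))"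
      and "x \<noteq> y"
    then obtain V where "V \<in> level \<tau> TT \<union> level \<tau> FF" "\<not>(x \<in> V \<longleftrightarrow> y \<in> V)" by blast
    then show "\<exists>U. generate_topology_on (level \<tau> TT \<union> level \<tau> FF) U \<and> (x \<notin> U) = (y \<in> U)"
      using generate_topology_on.Basis by blast
  qed
  also have "\<dots> \<longleftrightarrow> B_T0 \<tau>"
    unfolding sep B_T0_def spec_Top by blast
  finally show ?thesis by simp
qed

theorem mainTheorem13:
  fixes \<tau> :: "('a \<Rightarrow> B4) set"
  assumes "B_topology \<tau>"
  shows "(B_R0 \<tau> \<longleftrightarrow> R0_space (level_top \<tau> TT) \<and> R0_space (level_top \<tau> FF))
       \<and> (B_T1 \<tau> \<longleftrightarrow>
            t0_space (topology_generated_by (level \<tau> TT \<union> level \<tau> FF))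
            \<and> R0_space (level_top \<tau> TT) \<and> R0_space (level_top \<tau> FF))"
  unfolding B_T1_def B_R0_char R0_char[OF assms, of TT, simplified] R0_char[OF assms, of FF, simplified]
    T0_char[OF assms, symmetric] by blast

end
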